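(* Let $M\in\mathbb{C}^{3\times 3}$ be nonsingular and let $s\in\mathbb{C}^3$ be a nonzero vector such that for every integer $k\ge 1$, $s$ is not a column eigenvector of $M^k$. Let $F_1,F_2,F_3\in\mathbb{C}^{2\times 3}$ with $\mathrm{rank}(F_i)=2$ for $1\le i\le 3$, such that the intersection of the row spaces of $F_1,F_2,F_3$ is $\{0\}$. Then for every positive integer $n$ there exist some $F\in\{F_1,F_2,F_3\}$ and some subset $S\subseteq\{FM^ks: 0\le k\le n^3\}$ with $|S|\ge n$ such that the vectors in $S$ are pairwise linearly independent. *)

theory Defs
  imports "HOL-Analysis.Analysis"
begin

fun matpow :: "'a::semiring_1^'n^'n \<Rightarrow> nat \<Rightarrow> 'a^'n^'n" where
  "matpow M 0 = mat 1"
| "matpow M (Suc k) = matpow M k ** M"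

end

theory Submission
  imports Defs
begin

definition dot3 :: "complex^3 \<Rightarrow> complex^3 \<Rightarrow> complex" where
  "dot3 x y = x$1*y$1 + x$2*y$2 + x$3*y$3"
definition cross3 :: "complex^3 \<Rightarrow> complex^3 \<Rightarrow> complex^3" where
  "cross3 x y = vector [x$2*y$3 - x$3*y$2, x$3*y$1 - x$1*y$3, x$1*y$2 - x$2*y$1]"

lemma cross3_nth[simp]:
  "cross3 x y $ 1 = x$2*y$3 - x$3*y$2"
  "cross3 x y $ 2 = x$3*y$1 - x$1*y$3"
  "cross3 x y $ 3 = x$1*y$2 - x$2*y$1"
  by (simp_all add: cross3_def)

lemma vec3_eq: "(x::'a^3) = y \<longleftrightarrow> x$1 = y$1 \<and> x$2 = y$2 \<and> x$3 = y$3"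
  by (auto simp: vec_eq_iff forall_3)

lemma vec3_0: "(x::'a::zero^3) = 0 \<longleftrightarrow> x$1 = 0 \<and> x$2 = 0 \<and> x$3 = 0"
  by (auto simp: vec_eq_iff forall_3)

lemma cross3_0[simp]: "cross3 0 b = 0" "cross3 a 0 = 0"
  by (simp_all add: vec3_0)

lemma bac_cab: "cross3 a (cross3 x y) = (dot3 a y) *s x - (dot3 a x) *s y"
  by (simp add: vec3_eq dot3_def algebra_simps)

lemma lagrange: "dot3 (cross3 a b) (cross3 x y) = dot3 a x * dot3 b y - dot3 a y * dot3 b x"
  by (simp add: dot3_def algebra_simps)

lemma cross_same: "cross3 (\<mu> *s c) (\<nu> *s c) = 0"
  by (simp add: vec3_0 algebra_simps)

lemma cross_zero_par:
  assumes "p \<noteq> 0" "cross3 p q = 0"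
  shows "\<exists>\<mu>. q = \<mu> *s p"
proof -
  have e: "p$2*q$3 = p$3*q$2" "p$3*q$1 = p$1*q$3" "p$1*q$2 = p$2*q$1"
    using assms(2) by (simp_all add: vec3_0)
  consider "p$1 \<noteq> 0" | "p$2 \<noteq> 0" | "p$3 \<noteq> 0" using assms(1) by (auto simp: vec3_0)
  then show ?thesis
  proof cases
    case 1
    show ?thesis by (rule exI[of _ "q$1/p$1"]) (use 1 e in \<open>auto simp: vec3_eq field_simps\<close>)
  next
    case 2
    show ?thesis by (rule exI[of _ "q$2/p$2"]) (use 2 e in \<open>auto simp: vec3_eq field_simps\<close>)
  next
    case 3
    show ?thesis by (rule exI[of _ "q$3/p$3"]) (use 3 e in \<open>auto simp: vec3_eq field_simps\<close>)
  qed
qed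

lemma det_kernel:
  fixes A :: "'a::field^'n^'n"
  shows "det A = 0 \<longleftrightarrow> (\<exists>x. x \<noteq> 0 \<and> A *v x = 0)"
  using invertible_det_nz[of A] invertible_left_inverse[of A] matrix_left_invertible_ker[of A]
  by auto

lemma mv3: "(vector [a, b, c] :: complex^3^3) *v x = vector [dot3 a x, dot3 b x, dot3 c x]"
  by (simp add: vec3_eq matrix_vector_mult_def sum_3 dot3_def)

lemma tmv3: "transpose (vector [a, b, c] :: complex^3^3) *v x = x$1 *s a + x$2 *s b + x$3 *s c"
  by (simp add: vec3_eq matrix_vector_mult_def sum_3 transpose_def algebra_simps)

lemma det_v3: "det (vector [a, b, c] :: complex^3^3) = dot3 c (cross3 a b)"
  by (simp add: det_3 dot3_def algebra_simps)

lemma L7: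
  assumes "dot3 r (cross3 p q) = 0"
  shows "\<exists>x::complex^3. x \<noteq> 0 \<and> x$1 *s p + x$2 *s q + x$3 *s r = 0"
proof -
  have "det (transpose (vector [p, q, r] :: complex^3^3)) = 0"
    using assms by (simp add: det_v3)
  then show ?thesis unfolding det_kernel tmv3 by auto
qed

lemma L9:
  assumes "cross3 a b \<noteq> 0" "dot3 r (cross3 a b) = 0"
  shows "r \<in> vec.span {a, b}"
proof -
  obtain x :: "complex^3" where x: "x \<noteq> 0" "x$1 *s a + x$2 *s b + x$3 *s r = 0"
    using L7[OF assms(2)] by blast
  show ?thesis
  proof (cases "x$3 = 0")
    case True
    then have z: "x$1 *s a + x$2 *s b = 0" using x by simp
    have e1: "x$1 *s cross3 a b = cross3 (x$1 *s a + x$2 *s b) b"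
      by (simp add: vec3_eq algebra_simps)
    have e2: "x$2 *s cross3 a b = cross3 a (x$1 *s a + x$2 *s b)"
      by (simp add: vec3_eq algebra_simps)
    have "x$1 = 0" using e1 assms(1) by (simp only: z cross3_0) simp
    moreover have "x$2 = 0" using e2 assms(1) by (simp only: z cross3_0) simp
    ultimately show ?thesis using True x(1) by (simp add: vec3_0)
  next
    case False
    have c: "x$1 * a$i + x$2 * b$i + x$3 * r$i = 0" for i
      using x(2) by (metis (no_types, lifting) vector_add_component vector_smult_component zero_index)
    have "r$i = (- x$1 / x$3) * a$i + (- x$2 / x$3) * b$i" for i
    proof -
      have "x$3 * r$i = (x$1 * a$i + x$2 * b$i + x$3 * r$i) - x$1 * a$i - x$2 * b$i"
        by (simp add: algebra_simps)
      also have "\<dots> = - x$1 * a$i - x$2 * b$i" using c[of i] by simp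
      finally have "x$3 * r$i = - x$1 * a$i - x$2 * b$i" .
      then show ?thesis using False by (simp add: field_simps)
    qed
    then have req: "r = (- x$1 / x$3) *s a + (- x$2 / x$3) *s b"
      by (simp add: vec_eq_iff)
    show ?thesis unfolding req
      by (intro vec.span_add vec.span_scale vec.span_base) auto
  qed
qed


lemma cross3_swap: "cross3 b a = - cross3 a b"
  by (simp add: vec3_eq)

lemma dot3_comm: "dot3 a b = dot3 b a"
  by (simp add: dot3_def mult.commute)

lemma matpow_add: "matpow M (a + b) = matpow M a ** matpow M b"
  by (induction b) (simp_all add: matrix_mul_assoc)

lemma matpow_inv: "invertible (M::'a::field^'n^'n) \<Longrightarrow> invertible (matpow M k)"
proof (induction k)
  case 0
  then show ?case unfolding invertible_def by (intro exI[of _ "mat 1"]) simp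
next
  case (Suc k)
  then show ?case by (simp add: invertible_mult)
qed

definition par2 :: "complex^2 \<Rightarrow> complex^2 \<Rightarrow> bool" where
  "par2 u v \<longleftrightarrow> u$1 * v$2 = u$2 * v$1"

lemma par2_refl: "par2 u u" by (simp add: par2_def mult.commute)
lemma par2_sym: "par2 u v \<Longrightarrow> par2 v u" by (simp add: par2_def mult.commute)

lemma par2_trans:
  assumes "par2 u s" "par2 s v" "s \<noteq> 0"
  shows "par2 u v"
proof -
  have e: "u$1 * s$2 = u$2 * s$1" "s$1 * v$2 = s$2 * v$1" using assms by (simp_all add: par2_def)
  have "(u$1 * v$2 - u$2 * v$1) * s$1 = u$1 * (s$1 * v$2) - (u$2 * s$1) * v$1"
    by (simp add: algebra_simps)
  also have "\<dots> = u$1 * (s$2 * v$1) - (u$1 * s$2) * v$1" using e by simp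
  also have "\<dots> = 0" by simp
  finally have A: "(u$1 * v$2 - u$2 * v$1) * s$1 = 0" .
  have "(u$1 * v$2 - u$2 * v$1) * s$2 = (u$1 * s$2) * v$2 - u$2 * (s$2 * v$1)"
    by (simp add: algebra_simps)
  also have "\<dots> = (u$2 * s$1) * v$2 - u$2 * (s$1 * v$2)" using e by simp
  also have "\<dots> = 0" by simp
  finally have B: "(u$1 * v$2 - u$2 * v$1) * s$2 = 0" .
  note A B
  moreover have "s$1 \<noteq> 0 \<or> s$2 \<noteq> 0" using assms(3) by (auto simp: vec_eq_iff forall_2)
  ultimately show ?thesis by (auto simp: par2_def)
qed

lemma dep_par2:
  assumes "vec.dependent {u, v}"
  shows "par2 u v"
proof (cases "u = v")
  case True then show ?thesis by (simp add: par2_refl)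
next
  case False
  then have "vec.dependent {v} \<or> u \<in> vec.span {v}"
    using assms vec.independent_insert[of u "{v}"] by auto
  then show ?thesis
  proof
    assume "vec.dependent {v}" then have "v = 0" by simp
    then show ?thesis by (simp add: par2_def)
  next
    assume "u \<in> vec.span {v}"
    then obtain k where "u = k *s v" by (auto simp: vec.span_singleton)
    then show ?thesis by (simp add: par2_def)
  qed
qed

lemma Fv1: "((F::complex^3^2) *v x)$1 = dot3 (F$1) x"
  by (simp add: matrix_vector_mult_def sum_3 dot3_def)
lemma Fv2: "((F::complex^3^2) *v x)$2 = dot3 (F$2) x"
  by (simp add: matrix_vector_mult_def sum_3 dot3_def)

lemma par2_F: "par2 (F *v x) (F *v y) \<longleftrightarrow> dot3 (cross3 (F$1) (F$2)) (cross3 x y) = 0"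
  by (simp add: par2_def Fv1 Fv2 lagrange mult.commute)

lemma F0: "(F::complex^3^2) *v x = 0 \<longleftrightarrow> dot3 (F$1) x = 0 \<and> dot3 (F$2) x = 0"
  by (simp add: vec_eq_iff forall_2 Fv1 Fv2)

lemma rows2: "rows (F::complex^3^2) = {F$1, F$2}"
  by (auto simp: rows_def row_def vec_lambda_eta forall_2 exhaust_2) (metis exhaust_2)+

lemma rank2_cross:
  assumes "rank (F::complex^3^2) = 2"
  shows "cross3 (F$1) (F$2) \<noteq> 0"
proof
  assume c: "cross3 (F$1) (F$2) = 0"
  have "\<exists>w. rows F \<subseteq> vec.span {w}"
  proof (cases "F$1 = 0")
    case True
    then show ?thesis unfolding rows2 by (intro exI[of _ "F$2"]) (auto simp: vec.span_base vec.span_zero)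
  next
    case False
    then obtain \<mu> where "F$2 = \<mu> *s F$1" using cross_zero_par c by blast
    then show ?thesis unfolding rows2
      by (intro exI[of _ "F$1"]) (auto simp: vec.span_base vec.span_scale)
  qed
  then obtain w where "rows F \<subseteq> vec.span {w}" by blast
  then have "vec.dim (rows F) \<le> card {w}" by (intro vec.dim_le_card) auto
  then show False using assms by (simp add: row_rank_def_gen)
qed

lemma kernel_unique:
  assumes "rank (F::complex^3^2) = 2" "F *v x = 0" "F *v y = 0"
  shows "cross3 x y = 0"
proof (rule ccontr)
  assume c: "cross3 x y \<noteq> 0"
  have "cross3 (cross3 x y) (F$i) = 0" if "i = 1 \<or> i = 2" for i
  proof -
    have "dot3 (F$i) x = 0" "dot3 (F$i) y = 0" using assms(2,3) that by (auto simp: F0)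
    then have "cross3 (F$i) (cross3 x y) = 0" using bac_cab[of "F$i" x y] by simp
    then show ?thesis using cross3_swap[of "F$i" "cross3 x y"] by simp
  qed
  then obtain \<alpha> \<beta> where "F$1 = \<alpha> *s cross3 x y" "F$2 = \<beta> *s cross3 x y"
    using cross_zero_par[OF c] by blast
  then have "cross3 (F$1) (F$2) = 0" by (simp add: cross_same)
  then show False using rank2_cross[OF assms(1)] by simp
qed


lemma v_nonzero:
  fixes M :: "complex^3^3"
  assumes "\<And>k. k \<ge> 1 \<Longrightarrow> \<not> (\<exists>\<mu>. matpow M k *v s = \<mu> *s s)" "s \<noteq> 0"
  shows "matpow M k *v s \<noteq> 0"
proof (cases "k = 0")
  case True then show ?thesis using assms(2) by simp
next
  case False
  show ?thesis
  proof
    assume "matpow M k *v s = 0"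
    then have "matpow M k *v s = 0 *s s" by simp
    then show False using assms(1)[of k] False by auto
  qed
qed

lemma v_cross_lt:
  fixes M :: "complex^3^3"
  assumes inv: "invertible M"
    and hyp: "\<And>k. k \<ge> 1 \<Longrightarrow> \<not> (\<exists>\<mu>. matpow M k *v s = \<mu> *s s)" and s0: "s \<noteq> 0"
    and jk: "j < k"
  shows "cross3 (matpow M j *v s) (matpow M k *v s) \<noteq> 0"
proof
  assume c: "cross3 (matpow M j *v s) (matpow M k *v s) = 0"
  obtain \<mu> where e: "matpow M k *v s = \<mu> *s (matpow M j *v s)"
    using cross_zero_par[OF v_nonzero[OF hyp s0] c] by blast
  have "matpow M k = matpow M j ** matpow M (k-j)" using matpow_add[of M j "k-j"] jk by simp
  then have "matpow M j *v (matpow M (k-j) *v s) = matpow M j *v (\<mu> *s s)"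
    using e by (simp add: matrix_vector_mul_assoc vector_scalar_commute)
  then have "matpow M (k-j) *v s = \<mu> *s s"
    using inj_matrix_vector_mult[OF matpow_inv[OF inv, of j]] by (simp add: inj_eq)
  moreover have "k - j \<ge> 1" using jk by simp
  ultimately show False using hyp[of "k-j"] by blast
qed

lemma v_cross:
  fixes M :: "complex^3^3"
  assumes inv: "invertible M"
    and hyp: "\<And>k. k \<ge> 1 \<Longrightarrow> \<not> (\<exists>\<mu>. matpow M k *v s = \<mu> *s s)" and s0: "s \<noteq> 0"
    and jk: "j \<noteq> k"
  shows "cross3 (matpow M j *v s) (matpow M k *v s) \<noteq> 0"
proof (cases "j < k")
  case True then show ?thesis using v_cross_lt[OF inv hyp s0] by blast
next
  case False
  then have "k < j" using jk by simp
  then have "cross3 (matpow M k *v s) (matpow M j *v s) \<noteq> 0" using v_cross_lt[OF inv hyp s0] by blast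
  then show ?thesis using cross3_swap[of "matpow M j *v s" "matpow M k *v s"] by simp
qed

lemma classes:
  fixes X :: "(complex^2) set"
  assumes fin: "finite X"
    and small: "\<And>S. S \<subseteq> X \<Longrightarrow> (\<forall>u \<in> S. \<forall>v \<in> S. u \<noteq> v \<longrightarrow> \<not> vec.dependent {u, v}) \<Longrightarrow> card S < n"
  shows "\<exists>S \<subseteq> X. card S < n \<and> (\<forall>x\<in>X. \<exists>s\<in>S. par2 x s)"
proof -
  define P where "P = {S. S \<subseteq> X \<and> (\<forall>u \<in> S. \<forall>v \<in> S. u \<noteq> v \<longrightarrow> \<not> vec.dependent {u, v})}"
  have finP: "finite P" using fin unfolding P_def by (rule rev_finite_subset[OF finite_Pow_iff[THEN iffD2]]) auto
  have "{} \<in> P" unfolding P_def by auto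
  define m where "m = Max (card ` P)"
  have "m \<in> card ` P" unfolding m_def using finP \<open>{} \<in> P\<close> by (intro Max_in) auto
  then obtain S where S: "S \<in> P" "card S = m" by blast
  have mx: "card T \<le> m" if "T \<in> P" for T unfolding m_def using finP that by (intro Max_ge) auto
  have SX: "S \<subseteq> X" and pw: "\<forall>u \<in> S. \<forall>v \<in> S. u \<noteq> v \<longrightarrow> \<not> vec.dependent {u, v}"
    using S(1) unfolding P_def by auto
  have "\<exists>s\<in>S. par2 x s" if x: "x \<in> X" for x
  proof (rule ccontr)
    assume nx: "\<not> (\<exists>s\<in>S. par2 x s)"
    then have xS: "x \<notin> S" using par2_refl by blast
    have "insert x S \<in> P" unfolding P_def
    proof (intro CollectI conjI)
      show "insert x S \<subseteq> X" using x SX by auto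
      show "\<forall>u \<in> insert x S. \<forall>v \<in> insert x S. u \<noteq> v \<longrightarrow> \<not> vec.dependent {u, v}"
        using pw nx dep_par2 par2_sym by (metis insert_commute insert_iff)
    qed
    then have "card (insert x S) \<le> m" by (rule mx)
    moreover have "finite S" using SX fin finite_subset by blast
    ultimately show False using xS S(2) by simp
  qed
  moreover have "card S < n" using small SX pw by blast
  ultimately show ?thesis using SX by blast
qed

lemma triple:
  fixes F1 F2 F3 :: "complex^3^2"
  assumes "rank F1 = 2" and "rank F2 = 2" and "rank F3 = 2"
    and inter: "vec.span (rows F1) \<inter> vec.span (rows F2) \<inter> vec.span (rows F3) = {0}"
    and c: "cross3 x y \<noteq> 0"
    and p: "par2 (F1 *v x) (F1 *v y)" "par2 (F2 *v x) (F2 *v y)" "par2 (F3 *v x) (F3 *v y)"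
  shows False
proof -
  have mem: "cross3 x y \<in> vec.span (rows F)" if "rank F = 2" "par2 (F *v x) (F *v y)" for F :: "complex^3^2"
  proof -
    have "dot3 (cross3 x y) (cross3 (F$1) (F$2)) = 0" using that(2) by (simp add: par2_F dot3_comm)
    then show ?thesis using L9[OF rank2_cross[OF that(1)]] by (simp add: rows2)
  qed
  have "cross3 x y \<in> {0}" using mem[OF assms(1) p(1)] mem[OF assms(2) p(2)] mem[OF assms(3) p(3)] inter
    by blast
  then show False using c by simp
qed

lemma final_arith: "2 \<le> (n::nat) \<Longrightarrow> (n-1)^3 + 3 < n^3 + 1"
proof -
  assume "2 \<le> n"
  then obtain m where n: "n = Suc m" "1 \<le> m" by (cases n) auto
  have "Suc m ^ 3 = m*m*m + 3*(m*m) + 3*m + 1" by (simp add: power3_eq_cube algebra_simps)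
  moreover have "m^3 = m*m*m" by (simp add: power3_eq_cube)
  ultimately show ?thesis using n by simp
qed


theorem lemma3p1:
  fixes M :: "complex^3^3" and s :: "complex^3"
    and F1 F2 F3 :: "complex^3^2" and n :: nat
  assumes "invertible M"
    and "s \<noteq> 0"
    and "\<And>k. k \<ge> 1 \<Longrightarrow> \<not> (\<exists>\<mu>. matpow M k *v s = \<mu> *s s)"
    and "rank F1 = 2" and "rank F2 = 2" and "rank F3 = 2"
    and "vec.span (rows F1) \<inter> vec.span (rows F2) \<inter> vec.span (rows F3) = {0}"
    and "n > 0"
  shows "\<exists>F \<in> {F1, F2, F3}. \<exists>S.
           S \<subseteq> {F *v (matpow M k *v s) | k. k \<le> n ^ 3} \<and> card S \<ge> n \<and>
           (\<forall>u \<in> S. \<forall>v \<in> S. u \<noteq> v \<longrightarrow> \<not> vec.dependent {u, v})"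
proof (cases "n = 1")
  case True
  show ?thesis
    by (rule bexI[of _ F1], rule exI[of _ "{F1 *v (matpow M 0 *v s)}"]) (auto simp: True intro!: exI[of _ 0])
next
  case False
  then have n2: "2 \<le> n" using assms(8) by simp
  note inv = assms(1) and s0 = assms(2) and hyp = assms(3)
  define N where "N = n ^ 3"
  define v where "v k = matpow M k *v s" for k
  show ?thesis
  proof (rule ccontr)
    assume neg: "\<not> ?thesis"
    define X where "X F = {F *v v k | k. k \<le> N \<and> F *v v k \<noteq> 0}" for F :: "complex^3^2"
    have small: "card S < n"
      if "F \<in> {F1, F2, F3}" "S \<subseteq> X F" "\<forall>u \<in> S. \<forall>v \<in> S. u \<noteq> v \<longrightarrow> \<not> vec.dependent {u, v}"
      for F S
    proof -
      have "S \<subseteq> {F *v (matpow M k *v s) | k. k \<le> n ^ 3}"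
        using that(2) unfolding X_def v_def N_def by auto
      then show ?thesis using neg that(1,3) by (meson not_le)
    qed
    have finX: "finite (X F)" for F
    proof -
      have "X F \<subseteq> (\<lambda>k. F *v v k) ` {..N}" unfolding X_def by auto
      then show ?thesis by (rule finite_subset) simp
    qed
    have X0: "x \<noteq> 0" if "x \<in> X F" for x F using that unfolding X_def by auto
    obtain S1 where S1: "S1 \<subseteq> X F1" "card S1 < n" "\<forall>x\<in>X F1. \<exists>s\<in>S1. par2 x s"
    proof -
      have "\<exists>S \<subseteq> X F1. card S < n \<and> (\<forall>x\<in>X F1. \<exists>s\<in>S. par2 x s)"
        by (rule classes[OF finX]) (rule small[of F1], auto)
      then show ?thesis using that by blast
    qed
    obtain S2 where S2: "S2 \<subseteq> X F2" "card S2 < n" "\<forall>x\<in>X F2. \<exists>s\<in>S2. par2 x s"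
    proof -
      have "\<exists>S \<subseteq> X F2. card S < n \<and> (\<forall>x\<in>X F2. \<exists>s\<in>S. par2 x s)"
        by (rule classes[OF finX]) (rule small[of F2], auto)
      then show ?thesis using that by blast
    qed
    obtain S3 where S3: "S3 \<subseteq> X F3" "card S3 < n" "\<forall>x\<in>X F3. \<exists>s\<in>S3. par2 x s"
    proof -
      have "\<exists>S \<subseteq> X F3. card S < n \<and> (\<forall>x\<in>X F3. \<exists>s\<in>S. par2 x s)"
        by (rule classes[OF finX]) (rule small[of F3], auto)
      then show ?thesis using that by blast
    qed
    define c where "c S x = (SOME s. s \<in> S \<and> par2 x s)" for S :: "(complex^2) set" and x
    have cS: "c S x \<in> S \<and> par2 x (c S x)" if "\<forall>x\<in>X F. \<exists>s\<in>S. par2 x s" "x \<in> X F" for S x F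
    proof -
      have "\<exists>s. s \<in> S \<and> par2 x s" using that by blast
      then show ?thesis unfolding c_def by (rule someI_ex)
    qed
    define G where "G = {k. k \<le> N \<and> F1 *v v k \<noteq> 0 \<and> F2 *v v k \<noteq> 0 \<and> F3 *v v k \<noteq> 0}"
    define f where "f k = (c S1 (F1 *v v k), c S2 (F2 *v v k), c S3 (F3 *v v k))" for k
    have XG: "F *v v k \<in> X F" if "k \<le> N" "F *v v k \<noteq> 0" for F k
      using that unfolding X_def by blast
    have samecls: "par2 (F *v v j) (F *v v k)"
      if "\<forall>x\<in>X F. \<exists>s\<in>S. par2 x s" "S \<subseteq> X F" "j \<le> N" "k \<le> N" "F *v v j \<noteq> 0" "F *v v k \<noteq> 0"
        "c S (F *v v j) = c S (F *v v k)" for F S j k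
    proof -
      have a: "c S (F *v v j) \<in> S \<and> par2 (F *v v j) (c S (F *v v j))"
        using cS[OF that(1) XG[OF that(3,5)]] .
      have b: "par2 (F *v v k) (c S (F *v v j))"
        using cS[OF that(1) XG[OF that(4,6)]] that(7) by simp
      have "c S (F *v v j) \<noteq> 0" using a that(2) X0 by blast
      then show ?thesis using par2_trans[OF conjunct2[OF a] par2_sym[OF b]] by blast
    qed
    have injf: "inj_on f G"
    proof
      fix j k assume j: "j \<in> G" and k: "k \<in> G" and fe: "f j = f k"
      show "j = k"
      proof (rule ccontr)
        assume "j \<noteq> k"
        then have cr: "cross3 (v j) (v k) \<noteq> 0" unfolding v_def using v_cross[OF inv hyp s0] by blast
        have "par2 (F1 *v v j) (F1 *v v k)"
          using samecls[OF S1(3) S1(1)] j k fe unfolding G_def f_def by auto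
        moreover have "par2 (F2 *v v j) (F2 *v v k)"
          using samecls[OF S2(3) S2(1)] j k fe unfolding G_def f_def by auto
        moreover have "par2 (F3 *v v j) (F3 *v v k)"
          using samecls[OF S3(3) S3(1)] j k fe unfolding G_def f_def by auto
        ultimately show False using triple[OF assms(4,5,6,7) cr] by blast
      qed
    qed
    have fG: "f ` G \<subseteq> S1 \<times> S2 \<times> S3"
    proof
      fix t assume "t \<in> f ` G"
      then obtain k where k: "k \<in> G" "t = f k" by blast
      then show "t \<in> S1 \<times> S2 \<times> S3"
        using cS[OF S1(3) XG] cS[OF S2(3) XG] cS[OF S3(3) XG] unfolding G_def f_def by auto
    qed
    have finS: "finite S1" "finite S2" "finite S3"
      using S1(1) S2(1) S3(1) finX finite_subset by blast+
    have "card G \<le> card (S1 \<times> S2 \<times> S3)"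
      using card_inj_on_le[OF injf fG] finS by simp
    also have "\<dots> = card S1 * (card S2 * card S3)" by (simp add: card_cartesian_product)
    also have "\<dots> \<le> (n-1) * ((n-1) * (n-1))"
      using S1(2) S2(2) S3(2) by (intro mult_le_mono) auto
    also have "\<dots> = (n-1)^3" by (simp add: power3_eq_cube)
    finally have cG: "card G \<le> (n-1)^3" .
    define Z where "Z F = {k. k \<le> N \<and> F *v v k = 0}" for F :: "complex^3^2"
    have cZ: "card (Z F) \<le> 1" if "rank F = 2" for F
    proof -
      have "finite (Z F)" unfolding Z_def by simp
      moreover have "j = k" if "j \<in> Z F" "k \<in> Z F" for j k
      proof (rule ccontr)
        assume "j \<noteq> k"
        then have "cross3 (v j) (v k) \<noteq> 0" unfolding v_def using v_cross[OF inv hyp s0] by blast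
        moreover have "cross3 (v j) (v k) = 0"
          using kernel_unique[OF \<open>rank F = 2\<close>] that unfolding Z_def by auto
        ultimately show False by simp
      qed
      ultimately show ?thesis using card_le_Suc0_iff_eq by (metis One_nat_def)
    qed
    have "{..N} \<subseteq> G \<union> Z F1 \<union> Z F2 \<union> Z F3" unfolding G_def Z_def by auto
    then have "card {..N} \<le> card (G \<union> Z F1 \<union> Z F2 \<union> Z F3)"
      by (intro card_mono) (auto simp: G_def Z_def)
    also have "\<dots> \<le> card G + card (Z F1) + card (Z F2) + card (Z F3)"
      by (meson add_le_mono card_Un_le le_refl order_trans)
    also have "\<dots> \<le> (n-1)^3 + 3"
      using cG cZ[OF assms(4)] cZ[OF assms(5)] cZ[OF assms(6)] by linarith
    finally have "N + 1 \<le> (n-1)^3 + 3" by simp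
    then show False using final_arith[OF n2] unfolding N_def by simp
  qed
qed

end
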